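(* Let $\lambda>0$ and $n\ge0$ an integer. Then for all $x\in[-1,1]$, $$\mathcal I^\lambda_+C^{\lambda+1/2}_n(x)=\frac{\sqrt\pi\,\Gamma(\lambda)}{\Gamma(\lambda+\frac12)}\,\frac{n+2\lambda}{n+\lambda+\frac12}\,C^\lambda_n(x),\qquad \mathcal I^\lambda_-C^{\lambda+1/2}_n(x)=\frac{\sqrt\pi\,\Gamma(\lambda)}{\Gamma(\lambda+\frac12)}\,\frac{n+1}{n+\lambda+\frac12}\,C^\lambda_{n+1}(x).$$
   Context: $C^\mu_n$ are Gegenbauer polynomials with generating function $(1-2xr+r^2)^{-\mu}$. For $f\in L^1[-1,1]$ and $\lambda\ge0$: $I^\lambda_+f(x)=(1+x)^{-\lambda+1/2}\int_{-1}^x(x-\tau)^{-1/2}(1+\tau)^\lambda f(\tau)\,d\tau$, $I^\lambda_-f(x)=(1-x)^{-\lambda+1/2}\int_x^1(\tau-x)^{-1/2}(1-\tau)^\lambda f(\tau)\,d\tau$, $\mathcal I^\lambda_+=I^\lambda_++I^\lambda_-$, $\mathcal I^\lambda_-=I^\lambda_+-I^\lambda_-$. *)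

theory Defs
  imports "HOL-Analysis.Analysis"
begin

definition gegenbauer :: "real \<Rightarrow> nat \<Rightarrow> real \<Rightarrow> real" where
  "gegenbauer mu n x =
     (deriv ^^ n) (\<lambda>r. (1 - 2 * x * r + r\<^sup>2) powr (- mu)) 0 / fact n"

definition I_plus :: "real \<Rightarrow> (real \<Rightarrow> real) \<Rightarrow> real \<Rightarrow> real" where
  "I_plus lam f x = (1 + x) powr (- lam + 1/2) *
     (LINT \<tau>:{-1..x}|lborel. (x - \<tau>) powr (-1/2) * (1 + \<tau>) powr lam * f \<tau>)"

definition I_minus :: "real \<Rightarrow> (real \<Rightarrow> real) \<Rightarrow> real \<Rightarrow> real" where
  "I_minus lam f x = (1 - x) powr (- lam + 1/2) *
     (LINT \<tau>:{x..1}|lborel. (\<tau> - x) powr (-1/2) * (1 - \<tau>) powr lam * f \<tau>)"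

definition calI_plus :: "real \<Rightarrow> (real \<Rightarrow> real) \<Rightarrow> real \<Rightarrow> real" where
  "calI_plus lam f x = I_plus lam f x + I_minus lam f x"

definition calI_minus :: "real \<Rightarrow> (real \<Rightarrow> real) \<Rightarrow> real \<Rightarrow> real" where
  "calI_minus lam f x = I_plus lam f x - I_minus lam f x"

end

theory Submission
  imports Defs
begin


definition qq :: "real \<Rightarrow> real \<Rightarrow> real" where "qq x r = 1 - 2*x*r + r\<^sup>2"
definition DD :: "real \<Rightarrow> real \<Rightarrow> nat \<Rightarrow> real \<Rightarrow> real" where
  "DD mu x n = (deriv ^^ n) (\<lambda>r. qq x r powr (- mu))"

lemma open_qq: "open {r. 0 < qq x r}"
  unfolding qq_def by (intro open_Collect_less continuous_intros)

lemma deriv_helper: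
  assumes "qq x r > 0"
  shows "((\<lambda>r. poly P r * qq x r powr a) has_real_derivative
     (poly (pderiv P) r * qq x r + a * poly P r * (2*r - 2*x)) * qq x r powr (a-1)) (at r)"
proof -
  have d1: "((\<lambda>r. qq x r) has_real_derivative (2*r - 2*x)) (at r)"
    unfolding qq_def by (auto intro!: derivative_eq_intros)
  have d2: "((\<lambda>r. qq x r powr a) has_real_derivative (qq x r powr a) * (0 * ln (qq x r) + (2*r-2*x) * a / qq x r)) (at r)"
    by (rule DERIV_powr[OF d1 assms]) (rule DERIV_const)
  have e: "qq x r powr a = qq x r * qq x r powr (a-1)"
    using assms by (simp add: powr_diff)
  have "((\<lambda>r. poly P r * qq x r powr a) has_real_derivative
     poly (pderiv P) r * qq x r powr a + poly P r * ((qq x r powr a) * (0 * ln (qq x r) + (2*r-2*x) * a / qq x r))) (at r)"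
    using DERIV_mult[OF poly_DERIV[of P r] d2] by (simp add: mult_ac)
  moreover have "poly (pderiv P) r * qq x r powr a + poly P r * ((qq x r powr a) * (0 * ln (qq x r) + (2*r-2*x) * a / qq x r))
     = (poly (pderiv P) r * qq x r + a * poly P r * (2*r - 2*x)) * qq x r powr (a-1)"
    using assms unfolding e by (simp add: field_simps)
  ultimately show ?thesis by simp
qed

lemma DD_rep:
  "\<exists>P. \<forall>r. qq x r > 0 \<longrightarrow> DD mu x n r = poly P r * qq x r powr (- mu - real n)
      \<and> (DD mu x n has_real_derivative DD mu x (Suc n) r) (at r)"
proof (induction n)
  case 0
  show ?case
  proof (intro exI[of _ 1] allI impI conjI)
    fix r assume r: "qq x r > 0"
    show "DD mu x 0 r = poly 1 r * qq x r powr (- mu - real 0)" by (simp add: DD_def)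
    have h: "((\<lambda>r. poly 1 r * qq x r powr (- mu)) has_real_derivative
     (poly (pderiv 1) r * qq x r + (-mu) * poly 1 r * (2*r - 2*x)) * qq x r powr (-mu-1)) (at r)"
      by (rule deriv_helper[OF r])
    hence h': "(DD mu x 0 has_real_derivative
     (poly (pderiv 1) r * qq x r + (-mu) * poly 1 r * (2*r - 2*x)) * qq x r powr (-mu-1)) (at r)"
      by (simp add: DD_def)
    have "DD mu x (Suc 0) r = deriv (DD mu x 0) r" by (simp add: DD_def)
    also have "\<dots> = (poly (pderiv 1) r * qq x r + (-mu) * poly 1 r * (2*r - 2*x)) * qq x r powr (-mu-1)"
      by (rule DERIV_imp_deriv[OF h'])
    finally show "(DD mu x 0 has_real_derivative DD mu x (Suc 0) r) (at r)" using h' by simp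
  qed
next
  case (Suc n)
  then obtain P where P: "\<And>r. qq x r > 0 \<Longrightarrow> DD mu x n r = poly P r * qq x r powr (- mu - real n)
      \<and> (DD mu x n has_real_derivative DD mu x (Suc n) r) (at r)" by blast
  define a where "a = - mu - real n"
  define P' where "P' = pderiv P * [:1, -2*x, 1:] + smult a (P * [:-2*x, 2:])"
  have Dsuc: "DD mu x (Suc n) r = poly P' r * qq x r powr (- mu - real (Suc n))" if r: "qq x r > 0" for r
  proof -
    have h: "((\<lambda>r. poly P r * qq x r powr a) has_real_derivative
     (poly (pderiv P) r * qq x r + a * poly P r * (2*r - 2*x)) * qq x r powr (a-1)) (at r)"
      by (rule deriv_helper[OF r])
    have h2: "(DD mu x n has_real_derivative
     (poly (pderiv P) r * qq x r + a * poly P r * (2*r - 2*x)) * qq x r powr (a-1)) (at r)"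
      by (rule has_field_derivative_transform_within_open[OF h open_qq]) (use r P a_def in auto)
    have "DD mu x (Suc n) r = deriv (DD mu x n) r" by (simp add: DD_def)
    also have "\<dots> = (poly (pderiv P) r * qq x r + a * poly P r * (2*r - 2*x)) * qq x r powr (a-1)"
      by (rule DERIV_imp_deriv[OF h2])
    also have "\<dots> = poly P' r * qq x r powr (- mu - real (Suc n))"
      by (simp add: P'_def a_def qq_def algebra_simps power2_eq_square)
    finally show ?thesis .
  qed
  show ?case
  proof (intro exI[of _ P'] allI impI conjI)
    fix r assume r: "qq x r > 0"
    show "DD mu x (Suc n) r = poly P' r * qq x r powr (- mu - real (Suc n))" by (rule Dsuc[OF r])
    define b where "b = - mu - real (Suc n)"
    have h: "((\<lambda>r. poly P' r * qq x r powr b) has_real_derivative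
     (poly (pderiv P') r * qq x r + b * poly P' r * (2*r - 2*x)) * qq x r powr (b-1)) (at r)"
      by (rule deriv_helper[OF r])
    have h2: "(DD mu x (Suc n) has_real_derivative
     (poly (pderiv P') r * qq x r + b * poly P' r * (2*r - 2*x)) * qq x r powr (b-1)) (at r)"
      by (rule has_field_derivative_transform_within_open[OF h open_qq]) (use r Dsuc b_def in auto)
    have "DD mu x (Suc (Suc n)) r = deriv (DD mu x (Suc n)) r" by (simp add: DD_def)
    also have "\<dots> = (poly (pderiv P') r * qq x r + b * poly P' r * (2*r - 2*x)) * qq x r powr (b-1)"
      by (rule DERIV_imp_deriv[OF h2])
    finally show "(DD mu x (Suc n) has_real_derivative DD mu x (Suc (Suc n)) r) (at r)" using h2 by simp
  qed
qed

lemma DD_deriv: "qq x r > 0 \<Longrightarrow> (DD mu x n has_real_derivative DD mu x (Suc n) r) (at r)"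
  using DD_rep[of x mu n] by blast

lemma zero_deriv:
  assumes "open S" "r \<in> S" "\<And>s. s \<in> S \<Longrightarrow> f s = 0" "(f has_real_derivative f') (at r)"
  shows "f' = 0"
proof -
  have "((\<lambda>_. 0::real) has_real_derivative 0) (at r)" by (rule DERIV_const)
  hence "(f has_real_derivative 0) (at r)"
    by (rule has_field_derivative_transform_within_open[OF _ assms(1,2)]) (use assms(3) in auto)
  thus ?thesis using assms(4) DERIV_unique by blast
qed

lemma DD1: assumes "qq x r > 0" shows "qq x r * DD mu x 1 r + mu * (2*r - 2*x) * DD mu x 0 r = 0"
proof -
  have h: "((\<lambda>r. poly 1 r * qq x r powr (- mu)) has_real_derivative
     (poly (pderiv 1) r * qq x r + (-mu) * poly 1 r * (2*r - 2*x)) * qq x r powr (-mu-1)) (at r)"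
    by (rule deriv_helper[OF assms])
  hence h': "(DD mu x 0 has_real_derivative (-mu) * (2*r - 2*x) * qq x r powr (-mu-1)) (at r)"
    by (simp add: DD_def)
  have "DD mu x 1 r = (-mu) * (2*r - 2*x) * qq x r powr (-mu-1)"
    using DERIV_unique[OF DD_deriv[OF assms, of mu 0] h'] by simp
  moreover have "qq x r * qq x r powr (-mu-1) = qq x r powr (-mu)"
    using assms by (simp add: powr_diff)
  moreover have "DD mu x 0 r = qq x r powr (-mu)" by (simp add: DD_def)
  ultimately have "qq x r * DD mu x 1 r = (-mu) * (2*r - 2*x) * DD mu x 0 r"
    by (metis mult.left_commute)
  thus ?thesis by simp
qed

lemma DDW:
  "qq x r > 0 \<Longrightarrow> qq x r * DD mu x (n+2) r + (real n+1+mu)*(2*r-2*x)*DD mu x (n+1) r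
     + (real n+1)*(real n+2*mu)*DD mu x n r = 0"
proof (induction n arbitrary: r)
  case 0
  let ?f = "\<lambda>r. qq x r * DD mu x 1 r + mu * (2*r - 2*x) * DD mu x 0 r"
  have "(?f has_real_derivative (2*r-2*x) * DD mu x 1 r + qq x r * DD mu x 2 r
          + (mu * 2 * DD mu x 0 r + mu*(2*r-2*x) * DD mu x 1 r)) (at r)"
    unfolding qq_def
    apply (intro derivative_eq_intros DD_deriv[unfolded qq_def] 0)
    using 0 by (auto simp: qq_def numeral_2_eq_2 intro!: DD_deriv[unfolded qq_def])
  from zero_deriv[OF open_qq _ _ this] 0 DD1 have "(2*r-2*x) * DD mu x 1 r + qq x r * DD mu x 2 r
          + (mu * 2 * DD mu x 0 r + mu*(2*r-2*x) * DD mu x 1 r) = 0" by auto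
  then show ?case by (simp add: algebra_simps numeral_2_eq_2)
next
  case (Suc n)
  let ?f = "\<lambda>r. qq x r * DD mu x (n+2) r + (real n+1+mu)*(2*r-2*x)*DD mu x (n+1) r
     + (real n+1)*(real n+2*mu)*DD mu x n r"
  have "(?f has_real_derivative (2*r-2*x) * DD mu x (n+2) r + qq x r * DD mu x (Suc (n+2)) r
          + ((real n+1+mu)*2*DD mu x (n+1) r + (real n+1+mu)*(2*r-2*x)*DD mu x (Suc (n+1)) r)
          + (real n+1)*(real n+2*mu)*DD mu x (Suc n) r) (at r)"
    unfolding qq_def
    apply (intro derivative_eq_intros DD_deriv[unfolded qq_def])
    using Suc.prems by (auto simp: qq_def intro!: DD_deriv[unfolded qq_def])
  from zero_deriv[OF open_qq _ _ this] Suc have "(2*r-2*x) * DD mu x (n+2) r + qq x r * DD mu x (Suc (n+2)) r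
          + ((real n+1+mu)*2*DD mu x (n+1) r + (real n+1+mu)*(2*r-2*x)*DD mu x (Suc (n+1)) r)
          + (real n+1)*(real n+2*mu)*DD mu x (Suc n) r = 0" by auto
  then show ?case by (simp add: algebra_simps)
qed

lemma geg_DD: "gegenbauer mu n x = DD mu x n 0 / fact n"
  by (simp add: gegenbauer_def DD_def qq_def)

lemma geg0: "gegenbauer mu 0 x = 1"
  by (simp add: geg_DD DD_def qq_def)

lemma geg1: "gegenbauer mu 1 x = 2 * mu * x"
proof -
  have "qq x 0 * DD mu x 1 0 + mu * (2*0 - 2*x) * DD mu x 0 0 = 0"
    by (rule DD1) (simp add: qq_def)
  moreover have "DD mu x 0 0 = 1" by (simp add: DD_def qq_def)
  ultimately show ?thesis by (simp add: geg_DD qq_def)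
qed

lemma geg_rec: "(real n + 2) * gegenbauer mu (n+2) x
   = 2 * x * (real n + 1 + mu) * gegenbauer mu (n+1) x - (real n + 2*mu) * gegenbauer mu n x"
proof -
  have W: "qq x 0 * DD mu x (n+2) 0 + (real n+1+mu)*(2*0-2*x)*DD mu x (n+1) 0
     + (real n+1)*(real n+2*mu)*DD mu x n 0 = 0"
    by (rule DDW) (simp add: qq_def)
  have f2: "fact (n+2) = (real n + 2) * fact (n+1)" by (simp add: algebra_simps)
  have f1: "fact (n+1) = (real n + 1) * fact n" by (simp add: algebra_simps)
  have aux: "(a+2)*(d/((a+2)*F)) = d/F" if "a \<ge> 0" for a d F :: real
    using that by (subst times_divide_eq_right, subst mult_divide_mult_cancel_left) auto
  have "(real n + 2) * gegenbauer mu (n+2) x = DD mu x (n+2) 0 / fact (n+1)"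
    unfolding geg_DD f2 by (rule aux) simp
  also have "DD mu x (n+2) 0 = 2 * x * (real n + 1 + mu) * DD mu x (n+1) 0 - (real n+1)*(real n+2*mu)*DD mu x n 0"
    using W by (simp add: qq_def algebra_simps)
  also have "\<dots> / fact (n+1) = 2 * x * (real n + 1 + mu) * gegenbauer mu (n+1) x - (real n + 2*mu) * gegenbauer mu n x"
  proof -
    have aux2: "(A - (a+1)*B*Dn)/((a+1)*F) = A/((a+1)*F) - B*(Dn/F)" if "a \<ge> 0" "F > 0" for a A B Dn F :: real
    proof -
      have "(a+1)*B*Dn/((a+1)*F) = B*(Dn/F)" using that
        by (metis mult.assoc mult_divide_mult_cancel_left_if times_divide_eq_right add_nonneg_eq_0_iff zero_neq_one zero_le_one)
      thus ?thesis by (simp add: diff_divide_distrib)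
    qed
    show ?thesis unfolding geg_DD f1 using aux2[of "real n" "fact n"] by simp
  qed
  finally show ?thesis .
qed

lemma geg_unique:
  assumes h0: "h 0 = 1" and h1: "h 1 = 2 * mu * x"
    and hr: "\<And>n. (real n + 2) * h (n+2) = 2 * x * (real n + 1 + mu) * h (n+1) - (real n + 2*mu) * h n"
  shows "h n = gegenbauer mu n x"
proof -
  have "h n = gegenbauer mu n x \<and> h (n+1) = gegenbauer mu (n+1) x"
  proof (induction n)
    case 0 then show ?case using h0 h1 geg0 geg1 by simp
  next
    case (Suc n)
    have "(real n + 2) * h (n+2) = (real n + 2) * gegenbauer mu (n+2) x"
      using hr[of n] geg_rec[of n mu x] Suc by simp
    hence "h (n+2) = gegenbauer mu (n+2) x" by simp
    then show ?case using Suc by simp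
  qed
  thus ?thesis by simp
qed

lemma geg_parity: "gegenbauer mu n (-x) = (-1)^n * gegenbauer mu n x"
proof -
  have "(-1)^n * gegenbauer mu n (-x) = gegenbauer mu n x"
  proof (rule geg_unique)
    show "(-1)^0 * gegenbauer mu 0 (-x) = 1" by (simp add: geg0)
    show "(-1)^1 * gegenbauer mu 1 (-x) = 2 * mu * x" using geg1[of mu "-x"] by simp
    fix n
    show "(real n + 2) * ((-1)^(n+2) * gegenbauer mu (n+2) (-x)) = 2 * x * (real n + 1 + mu) * ((-1)^(n+1) * gegenbauer mu (n+1) (-x)) - (real n + 2*mu) * ((-1)^n * gegenbauer mu n (-x))"
      using arg_cong[OF geg_rec[of n mu "-x"], of "\<lambda>t. (-1)^n * t"] by (simp add: algebra_simps)
  qed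
  hence "(-1)^n * ((-1)^n * gegenbauer mu n (-x)) = (-1)^n * gegenbauer mu n x" by simp
  moreover have "(-1)^n * ((-1)^n * (t::real)) = t" for t by (induct n) auto
  ultimately show ?thesis by simp
qed



definition ec :: "real \<Rightarrow> nat \<Rightarrow> nat \<Rightarrow> real" where
  "ec mu n k = (if k \<le> n then (-1)^k * pochhammer (2*mu) (n+k)
       / (fact (n-k) * fact k * pochhammer (mu+1/2) k * 2^k) else 0)"

lemma hlp: fixes s Q X F J H T a b c d :: real
  assumes "F\<noteq>0" "J\<noteq>0" "H\<noteq>0" "T\<noteq>0" "a\<noteq>0" "b\<noteq>0" "c\<noteq>0" "d\<noteq>0"
  shows "s * (Q * X) / ((a*F)*(b*J)*(H*c)*(d*T)) = (s*Q/(F*J*H*T)) * X / (a*b*c*d)"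
  using assms by (simp add: field_simps)

lemma hlp2: fixes s Q X F J H T b c d :: real
  assumes "F\<noteq>0" "J\<noteq>0" "H\<noteq>0" "T\<noteq>0" "b\<noteq>0" "c\<noteq>0" "d\<noteq>0"
  shows "s * (Q * X) / (F*(b*J)*(H*c)*(d*T)) = (s*Q/(F*J*H*T)) * X / (b*c*d)"
  using assms by (simp add: field_simps)

lemma alg_gen: fixes R B C M :: real assumes "B > 0" "C > 0" "M > 0"
  shows "(C+B+1) * (-R*((2*M+B-2)*(2*M+B-2+1)*(2*M+B-2+2)*(2*M+B-2+3))/((B+1)*B*C*M*2))
   = 2*(B+M+1/2)*(-R*((2*M+B-2)*(2*M+B-2+1)*(2*M+B-2+2))/(B*C*M*2) - R*((2*M+B-2)*(2*M+B-2+1))/((B+1)*B))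
     - (B+2*M-C)*(-R*((2*M+B-2)*(2*M+B-2+1))/(C*M*2))"
proof -
  define N where "N = 2*M+B-2"
  define D where "D = (B+1)*B*C*M*2"
  have nz: "B+1 \<noteq> 0" "B \<noteq> 0" "C \<noteq> 0" "M \<noteq> 0" using assms by auto
  have r2: "-R*(N*(N+1)*(N+2))/(B*C*M*2) = (-R*(N*(N+1)*(N+2))*(B+1))/D"
  proof -
    have dd: "D = (B*C*M*2)*(B+1)" unfolding D_def by (simp add: mult_ac)
    show ?thesis unfolding dd by (rule nonzero_mult_divide_mult_cancel_right[symmetric]) (use nz in simp)
  qed
  have r3: "R*(N*(N+1))/((B+1)*B) = (R*(N*(N+1))*(C*M*2))/D"
  proof -
    have dd: "D = ((B+1)*B)*(C*M*2)" unfolding D_def by (simp add: mult_ac)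
    show ?thesis unfolding dd by (rule nonzero_mult_divide_mult_cancel_right[symmetric]) (use nz in simp)
  qed
  have r4: "-R*(N*(N+1))/(C*M*2) = (-R*(N*(N+1))*((B+1)*B))/D"
  proof -
    have dd: "D = (C*M*2)*((B+1)*B)" unfolding D_def by (simp add: mult_ac)
    show ?thesis unfolding dd by (rule nonzero_mult_divide_mult_cancel_right[symmetric]) (use nz in simp)
  qed
  have key: "(C+B+1)*(-R*(N*(N+1)*(N+2)*(N+3))) = 2*(B+M+1/2)*(-R*(N*(N+1)*(N+2))*(B+1) - R*(N*(N+1))*(C*M*2))
     - (B+2*M-C)*(-R*(N*(N+1))*((B+1)*B))"
    unfolding N_def by (simp add: algebra_simps)
  have "(C+B+1) * (-R*(N*(N+1)*(N+2)*(N+3))/D)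
     = 2*(B+M+1/2)*((-R*(N*(N+1)*(N+2))*(B+1))/D - (R*(N*(N+1))*(C*M*2))/D)
       - (B+2*M-C)*((-R*(N*(N+1))*((B+1)*B))/D)" (is "?a * (?X1/D) = ?c * (?X2/D - ?X3/D) - ?e * (?X4/D)")
  proof -
    have "?a * (?X1/D) = (?a * ?X1)/D" by (rule times_divide_eq_right)
    also have "\<dots> = (?c * (?X2 - ?X3) - ?e * ?X4)/D" using key by simp
    also have "\<dots> = ?c * (?X2/D - ?X3/D) - ?e * (?X4/D)"
      by (simp only: diff_divide_distrib right_diff_distrib times_divide_eq_right)
    finally show ?thesis .
  qed
  then show ?thesis unfolding r2[unfolded N_def D_def] r3[unfolded N_def D_def] r4[unfolded N_def D_def] N_def D_def
    by (simp add: mult.assoc)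
qed

lemma ec_gen:
  fixes mu :: real and j m :: nat
  assumes mu: "mu > 0"
  defines "n \<equiv> Suc (j+m)"
  shows "(real n + 2) * ec mu (n+2) (Suc j) = 2 * (real n + 1 + mu) * (ec mu (n+1) (Suc j) - ec mu (n+1) j)
         - (real n + 2*mu) * ec mu n (Suc j)"
proof -
  define Q where "Q = pochhammer (2*mu) (j+m+j)"
  define F where "F = (fact m :: real)"
  define J where "J = (fact j :: real)"
  define H where "H = pochhammer (mu+1/2) j"
  define T where "T = (2::real)^j"
  define s where "s = ((-1::real)^j)"
  define R where "R = s * Q / (F*J*H*T)"
  define B where "B = real m + 1"
  define C where "C = real j + 1"
  define M where "M = mu + 1/2 + real j"
  define N where "N = 2*M+B-2"
  have nz: "F \<noteq> 0" "J \<noteq> 0" "H \<noteq> 0" "T \<noteq> 0" "Q \<noteq> 0"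
    using mu by (auto simp: F_def J_def H_def T_def Q_def pochhammer_eq_0_iff)
  have pos: "B > 0" "C > 0" "M > 0" "B+1 > 0" using mu by (auto simp: B_def C_def M_def)
  have P1: "pochhammer (2*mu) (n+2+Suc j) = Q * (N*(N+1)*(N+2)*(N+3))"
    "pochhammer (2*mu) (n+1+Suc j) = Q * (N*(N+1)*(N+2))"
    "pochhammer (2*mu) (n+1+j) = Q * (N*(N+1))"
    "pochhammer (2*mu) (n+Suc j) = Q * (N*(N+1))"
    by (simp_all add: Q_def N_def B_def M_def n_def pochhammer_rec' algebra_simps)
  have P2: "pochhammer (mu+1/2) (Suc j) = H * M" by (simp add: H_def M_def pochhammer_rec' algebra_simps)
  have F1: "(fact (n+2 - Suc j)::real) = ((B+1)*B)*F"
     "(fact (n+1 - Suc j)::real) = B*F"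
     "(fact (n+1 - j)::real) = ((B+1)*B)*F"
     "(fact (n - Suc j)::real) = F"
    by (simp_all add: F_def B_def n_def algebra_simps Suc_diff_le)
  have J1: "(fact (Suc j)::real) = C*J" by (simp add: J_def C_def algebra_simps)
  have T1: "(2::real)^Suc j = 2*T" by (simp add: T_def)
  have S1: "(-1::real)^Suc j = - s" by (simp add: s_def)
  have le: "Suc j \<le> n+2" "Suc j \<le> n+1" "j \<le> n+1" "Suc j \<le> n" by (simp_all add: n_def)
  have E1: "ec mu (n+2) (Suc j) = -R*(N*(N+1)*(N+2)*(N+3))/((B+1)*B*C*M*2)"
    unfolding ec_def if_P[OF le(1)] P1 P2 F1 J1 T1 S1 R_def
    using hlp[of F J H T "(B+1)*B" C M 2] nz pos by simp
  have E2: "ec mu (n+1) (Suc j) = -R*(N*(N+1)*(N+2))/(B*C*M*2)"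
    unfolding ec_def if_P[OF le(2)] P1 P2 F1 J1 T1 S1 R_def
    using hlp[of F J H T B C M 2] nz pos by simp
  have E3: "ec mu (n+1) j = R*(N*(N+1))/((B+1)*B)"
    unfolding ec_def if_P[OF le(3)] P1 P2 F1 J1 T1 S1 R_def
    using nz pos by (simp add: field_simps s_def T_def H_def J_def)
  have E4: "ec mu n (Suc j) = -R*(N*(N+1))/(C*M*2)"
    unfolding ec_def if_P[OF le(4)] P1 P2 F1 J1 T1 S1 R_def
    using hlp2[of F J H T C M 2] nz pos by simp
  have c1: "real n + 2 = C+B+1" "real n + 1 + mu = B+M+1/2" "real n + 2*mu = B+2*M-C"
    by (simp_all add: n_def B_def C_def M_def)
  show ?thesis
    unfolding E1 E2 E3 E4 c1 N_def using alg_gen[of B C M R] pos by simp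
qed
lemma ec_k0:
  fixes mu :: real assumes mu: "mu > 0"
  shows "(real n + 2) * ec mu (n+2) 0 = 2 * (real n + 1 + mu) * (ec mu (n+1) 0 - 0)
         - (real n + 2*mu) * ec mu n 0"
proof -
  define Q where "Q = pochhammer (2*mu) n"
  define F where "F = (fact n :: real)"
  define p where "p = real n + 1"
  define pp where "pp = real n + 2"
  have nz: "F \<noteq> 0" "p \<noteq> 0" "pp \<noteq> 0" by (auto simp: F_def p_def pp_def)
  have r: "pochhammer (2*mu) (n+2+0) = Q*((2*mu+p-1)*(2*mu+p))" "pochhammer (2*mu) (n+1+0) = Q*(2*mu+p-1)"
    "pochhammer (2*mu) (n+0) = Q"
    "(fact (n+2-0)::real) = (pp*p)*F" "(fact (n+1-0)::real) = p*F" "(fact (n-0)::real) = F"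
    by (simp_all add: Q_def F_def p_def pp_def pochhammer_rec' algebra_simps)
  have E1: "ec mu (n+2) 0 = Q*((2*mu+p-1)*(2*mu+p))/(pp*p*F)"
    unfolding ec_def if_P[OF le0] r by simp
  have E2: "ec mu (n+1) 0 = Q*(2*mu+p-1)/(p*F)"
    unfolding ec_def if_P[OF le0] r by simp
  have E3: "ec mu n 0 = Q/F"
    unfolding ec_def if_P[OF le0] r by simp
  have c: "real n + 2 = pp" "real n + 1 + mu = p + mu" "real n + 2*mu = p - 1 + 2*mu" by (simp_all add: p_def pp_def)
  show ?thesis unfolding E1 E2 E3 c using nz by (simp add: field_simps)
qed

lemma ec_kn1:
  fixes mu :: real assumes mu: "mu > 0"
  shows "(real n + 2) * ec mu (n+2) (Suc n) = 2 * (real n + 1 + mu) * (ec mu (n+1) (Suc n) - ec mu (n+1) n)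
         - (real n + 2*mu) * ec mu n (Suc n)"
proof -
  define Q where "Q = pochhammer (2*mu) (n+n)"
  define F where "F = (fact n :: real)"
  define H where "H = pochhammer (mu+1/2) n"
  define T where "T = (2::real)^n"
  define s where "s = ((-1::real)^n)"
  define R where "R = s * Q / (F*H*T)"
  define M where "M = mu + 1/2 + real n"
  define p where "p = real n + 1"
  define pp where "pp = real n + 2"
  have nz: "F \<noteq> 0" "H \<noteq> 0" "T \<noteq> 0" "p \<noteq> 0" "M \<noteq> 0" "pp \<noteq> 0"
    using mu by (auto simp: F_def H_def T_def p_def M_def pp_def pochhammer_eq_0_iff)
  have r: "pochhammer (2*mu) (n+2+Suc n) = Q*((2*M-1)*(2*M)*(2*M+1))"
    "pochhammer (2*mu) (n+1+Suc n) = Q*((2*M-1)*(2*M))"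
    "pochhammer (2*mu) (n+1+n) = Q*(2*M-1)"
    "(fact (n+2-Suc n)::real) = 1" "(fact (n+1-Suc n)::real) = 1" "(fact (n+1-n)::real) = 1"
    "(fact (Suc n)::real) = p*F"
    "pochhammer (mu+1/2) (Suc n) = H*M"
    "(2::real)^(Suc n) = 2*T" "(-1::real)^(Suc n) = -s"
    by (simp_all add: Q_def F_def p_def M_def H_def T_def s_def pochhammer_rec' algebra_simps Suc_diff_le)
  have le: "Suc n \<le> n+2" "Suc n \<le> n+1" "n \<le> n+1" by simp_all
  have E1: "ec mu (n+2) (Suc n) = -R*((2*M-1)*(2*M)*(2*M+1))/(p*M*2)"
    unfolding ec_def if_P[OF le(1)] r R_def using nz by (simp add: field_simps)
  have E2: "ec mu (n+1) (Suc n) = -R*((2*M-1)*(2*M))/(p*M*2)"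
    unfolding ec_def if_P[OF le(2)] r R_def using nz by (simp add: field_simps)
  have E3: "ec mu (n+1) n = R*(2*M-1)"
    unfolding ec_def if_P[OF le(3)] r R_def using nz by (simp add: field_simps F_def H_def T_def s_def)
  have E4: "ec mu n (Suc n) = 0" by (simp add: ec_def)
  have c: "real n + 2 = p + 1" "real n + 1 + mu = M + 1/2" by (simp_all add: p_def M_def)
  show ?thesis unfolding E1 E2 E3 E4 c using nz by (simp add: field_simps)
qed

lemma ec_kn2:
  fixes mu :: real assumes mu: "mu > 0"
  shows "(real n + 2) * ec mu (n+2) (Suc (Suc n)) = 2 * (real n + 1 + mu) * (ec mu (n+1) (Suc (Suc n)) - ec mu (n+1) (Suc n))
         - (real n + 2*mu) * ec mu n (Suc (Suc n))"
proof -
  define Q where "Q = pochhammer (2*mu) (n+n)"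
  define F where "F = (fact n :: real)"
  define H where "H = pochhammer (mu+1/2) n"
  define T where "T = (2::real)^n"
  define s where "s = ((-1::real)^n)"
  define R where "R = s * Q / (F*H*T)"
  define M where "M = mu + 1/2 + real n"
  define M1 where "M1 = mu + 3/2 + real n"
  define p where "p = real n + 1"
  define pp where "pp = real n + 2"
  have nz: "F \<noteq> 0" "H \<noteq> 0" "T \<noteq> 0" "p \<noteq> 0" "M \<noteq> 0" "pp \<noteq> 0" "M1 \<noteq> 0"
    using mu by (auto simp: F_def H_def T_def p_def M_def pp_def M1_def pochhammer_eq_0_iff)
  have r: "pochhammer (2*mu) (n+2+Suc (Suc n)) = Q*((2*M-1)*(2*M)*(2*M+1)*(2*M1))"
    "pochhammer (2*mu) (n+1+Suc n) = Q*((2*M-1)*(2*M))"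
    "(fact (n+2-Suc (Suc n))::real) = 1" "(fact (n+1-Suc n)::real) = 1"
    "(fact (Suc (Suc n))::real) = pp*(p*F)" "(fact (Suc n)::real) = p*F"
    "pochhammer (mu+1/2) (Suc (Suc n)) = H*M*M1" "pochhammer (mu+1/2) (Suc n) = H*M"
    "(2::real)^(Suc (Suc n)) = 4*T" "(2::real)^(Suc n) = 2*T"
    "(-1::real)^(Suc (Suc n)) = s" "(-1::real)^(Suc n) = -s"
    by (simp_all add: Q_def F_def p_def pp_def M_def M1_def H_def T_def s_def pochhammer_rec' algebra_simps Suc_diff_le)
  have le: "Suc (Suc n) \<le> n+2" "Suc n \<le> n+1" by simp_all
  have E1: "ec mu (n+2) (Suc (Suc n)) = R*((2*M-1)*(2*M)*(2*M+1))/(pp*p*M*2)"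
    unfolding ec_def if_P[OF le(1)] r R_def using nz by (simp add: field_simps)
  have E2: "ec mu (n+1) (Suc n) = -R*((2*M-1)*(2*M))/(p*M*2)"
    unfolding ec_def if_P[OF le(2)] r R_def using nz by (simp add: field_simps)
  have E3: "ec mu (n+1) (Suc (Suc n)) = 0" "ec mu n (Suc (Suc n)) = 0" by (simp_all add: ec_def)
  have c: "real n + 2 = pp" "real n + 1 + mu = M + 1/2" by (simp_all add: pp_def M_def)
  show ?thesis unfolding E1 E2 E3 c using nz by (simp add: field_simps)
qed

lemma ec_zero: "k > n \<Longrightarrow> ec mu n k = 0" by (simp add: ec_def)

lemma ec_rec:
  fixes mu :: real assumes mu: "mu > 0"
  shows "(real n + 2) * ec mu (n+2) k = 2 * (real n + 1 + mu) * (ec mu (n+1) k - (case k of 0 \<Rightarrow> 0 | Suc j \<Rightarrow> ec mu (n+1) j))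
         - (real n + 2*mu) * ec mu n k"
proof (cases k)
  case 0 then show ?thesis using ec_k0[OF mu, of n] by simp
next
  case (Suc j)
  consider "j < n" | "j = n" | "j = Suc n" | "j > Suc n" by linarith
  then show ?thesis
  proof cases
    case 1
    then obtain m where n: "n = Suc (j+m)" by (metis add_Suc_right less_imp_Suc_add)
    show ?thesis using ec_gen[OF mu, of j m] unfolding n[symmetric] Suc by simp
  next
    case 2 then show ?thesis using ec_kn1[OF mu, of n] Suc by simp
  next
    case 3 then show ?thesis using ec_kn2[OF mu, of n] Suc by simp
  next
    case 4 then show ?thesis using Suc by (simp add: ec_zero)
  qed
qed

definition EE :: "real \<Rightarrow> nat \<Rightarrow> real \<Rightarrow> real" where
  "EE mu n x = (\<Sum>k\<le>n. ec mu n k * (1-x)^k)"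

lemma EE_ext: "n \<le> N \<Longrightarrow> EE mu n x = (\<Sum>k\<le>N. ec mu n k * (1-x)^k)"
  unfolding EE_def by (rule sum.mono_neutral_left) (auto simp: ec_zero)

lemma EE_rec:
  fixes mu :: real assumes mu: "mu > 0"
  shows "(real n + 2) * EE mu (n+2) x = 2 * x * (real n + 1 + mu) * EE mu (n+1) x - (real n + 2*mu) * EE mu n x"
proof -
  define y where "y = 1 - x"
  have x: "x = 1 - y" by (simp add: y_def)
  define sh where "sh k = (case k of 0 \<Rightarrow> 0 | Suc j \<Rightarrow> ec mu (n+1) j)" for k
  have shift: "y * EE mu (n+1) x = (\<Sum>k\<le>n+2. sh k * y^k)"
  proof -
    have "y * EE mu (n+1) x = (\<Sum>k\<le>n+1. ec mu (n+1) k * y^Suc k)"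
      unfolding EE_def y_def sum_distrib_left by (intro sum.cong refl) (simp add: mult_ac)
    also have "\<dots> = (\<Sum>k\<le>Suc (n+1). sh k * y^k)"
      by (subst sum.atMost_Suc_shift) (simp add: sh_def)
    finally show ?thesis by simp
  qed
  have "(real n + 2) * EE mu (n+2) x = (\<Sum>k\<le>n+2. ((real n + 2) * ec mu (n+2) k) * y^k)"
    unfolding EE_def y_def sum_distrib_left by (intro sum.cong refl) (simp add: mult_ac)
  also have "\<dots> = (\<Sum>k\<le>n+2. (2 * (real n + 1 + mu) * (ec mu (n+1) k - sh k) - (real n + 2*mu) * ec mu n k) * y^k)"
    by (intro sum.cong refl) (simp only: ec_rec[OF mu] sh_def)
  also have "\<dots> = (\<Sum>k\<le>n+2. 2 * (real n + 1 + mu) * (ec mu (n+1) k * y^k) - 2 * (real n + 1 + mu) * (sh k * y^k)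
       - (real n + 2*mu) * (ec mu n k * y^k))"
    by (intro sum.cong refl) (simp add: algebra_simps)
  also have "\<dots> = 2 * (real n + 1 + mu) * (\<Sum>k\<le>n+2. ec mu (n+1) k * y^k) - 2 * (real n + 1 + mu) * (\<Sum>k\<le>n+2. sh k * y^k)
       - (real n + 2*mu) * (\<Sum>k\<le>n+2. ec mu n k * y^k)"
    by (simp only: sum_subtractf sum_distrib_left)
  also have "(\<Sum>k\<le>n+2. ec mu (n+1) k * y^k) = EE mu (n+1) x" unfolding y_def by (rule EE_ext[symmetric]) simp
  also have "(\<Sum>k\<le>n+2. ec mu n k * y^k) = EE mu n x" unfolding y_def by (rule EE_ext[symmetric]) simp
  also note shift[symmetric]
  finally show ?thesis by (simp add: x algebra_simps)
qed

lemma EE_geg: assumes mu: "mu > 0" shows "EE mu n x = gegenbauer mu n x"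
proof (rule geg_unique)
  show "EE mu 0 x = 1" by (simp add: EE_def ec_def)
  have "pochhammer (2*mu) (Suc (Suc 0)) = 2*mu*(2*mu+1)" by (simp add: pochhammer_rec' numeral_2_eq_2 algebra_simps)
  moreover have "pochhammer (mu+1/2) 1 = mu + 1/2" by simp
  moreover have "2*mu+1 \<noteq> 0" using mu by simp
  ultimately show "EE mu 1 x = 2 * mu * x" by (simp add: EE_def ec_def field_simps)
  show "(real n + 2) * EE mu (n+2) x = 2 * x * (real n + 1 + mu) * EE mu (n+1) x - (real n + 2*mu) * EE mu n x" for n
    by (rule EE_rec[OF mu])
qed



lemma beta_aff:
  fixes a b d :: real assumes a: "a > 0" and b: "b > 0" and d: "d > 0"
  shows "((\<lambda>t. t powr (a-1) * (d - t) powr (b-1)) has_integral d powr (a+b-1) * Beta a b) {0..d}"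
proof -
  have h: "((\<lambda>t. t powr (a - 1) * (1 - t) powr (b - 1)) has_integral Beta a b) (cbox 0 1)"
    using has_integral_Beta_real[OF a b] by simp
  have img: "(\<lambda>x. x * d) ` {0..1} = {0..d}"
    using image_affinity_atLeastAtMost[of d 0 0 1] d by (simp add: mult.commute)
  from has_integral_affinity[OF h, of "1/d" 0] d img
  have h2: "((\<lambda>t. (t/d) powr (a - 1) * (1 - t/d) powr (b - 1)) has_integral d * Beta a b) {0..d}"
    by (simp add: image_affinity_atLeastAtMost divide_inverse mult.commute)
  have "((\<lambda>t. d powr (a+b-2) * ((t/d) powr (a - 1) * (1 - t/d) powr (b - 1))) has_integral d powr (a+b-2) * (d * Beta a b)) {0..d}"
    by (rule has_integral_mult_right[OF h2])
  moreover have "d powr (a+b-2) * (d * Beta a b) = d powr (a+b-1) * Beta a b"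
    using d by (simp add: powr_diff powr_add field_simps power2_eq_square)
  moreover have "d powr (a+b-2) * ((t/d) powr (a - 1) * (1 - t/d) powr (b - 1)) = t powr (a-1) * (d - t) powr (b-1)" for t
  proof -
    have "1 - t/d = (d - t)/d" using d by (simp add: field_simps)
    hence "d powr (a+b-2) * ((t/d) powr (a - 1) * (1 - t/d) powr (b - 1))
        = d powr (a+b-2) * (t powr (a-1) / d powr (a-1) * ((d - t) powr (b-1) / d powr (b-1)))"
      by (simp add: powr_divide)
    also have "\<dots> = t powr (a-1) * (d - t) powr (b-1) * (d powr (a+b-2) / (d powr (a-1) * d powr (b-1)))"
      by (simp add: field_simps)
    also have "d powr (a+b-2) / (d powr (a-1) * d powr (b-1)) = 1"
      using d by (simp add: powr_add[symmetric])
    finally show ?thesis by simp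
  qed
  ultimately show ?thesis by simp
qed
lemma powr_nat_combine:
  fixes t lam :: real assumes "t \<ge> 0" "lam > 0"
  shows "t powr lam * t^k = t powr (lam + real k)"
proof (cases "t = 0")
  case True then show ?thesis using assms by simp
next
  case False then show ?thesis using assms by (simp add: powr_add powr_realpow)
qed

lemma term_minus:
  fixes lam x :: real assumes lam: "lam > 0" and x: "x < 1"
  shows "((\<lambda>\<tau>. (\<tau>-x) powr (-1/2) * (1-\<tau>) powr lam * (1-\<tau>)^k) has_integral
           (1-x) powr (lam + real k + 1/2) * Beta (lam + real k + 1) (1/2)) {x..1}"
proof -
  define d where "d = 1 - x"
  have d: "d > 0" using x by (simp add: d_def)
  have h: "((\<lambda>t. t powr (lam + real k + 1 - 1) * (d - t) powr (1/2 - 1)) has_integral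
      d powr (lam + real k + 1 + 1/2 - 1) * Beta (lam + real k + 1) (1/2)) (cbox 0 d)"
    using beta_aff[of "lam + real k + 1" "1/2" d] lam d by simp
  have img: "(\<lambda>t. - t + 1) ` {0..d} = {x..1}"
    using image_affinity_atLeastAtMost[of "-1" 1 0 d] d by (simp add: d_def)
  from has_integral_affinity[OF h, of "-1" 1] d
  have h2: "((\<lambda>\<tau>. (1-\<tau>) powr (lam + real k) * (d - (1-\<tau>)) powr (-1/2)) has_integral
      d powr (lam + real k + 1/2) * Beta (lam + real k + 1) (1/2)) {x..1}"
    by (simp add: algebra_simps image_affinity_atLeastAtMost d_def)
  show ?thesis
  proof (rule has_integral_eq[OF _ h2[unfolded d_def]])
    fix t assume t: "t \<in> {x..1}"
    then show "(1-t) powr (lam + real k) * (1 - x - (1-t)) powr (-1/2) = (t-x) powr (-1/2) * (1-t) powr lam * (1-t)^k"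
      using powr_nat_combine[of "1-t" lam k] lam by (simp add: algebra_simps)
  qed
qed

lemma term_plus:
  fixes lam x :: real assumes lam: "lam > 0" and x: "x > -1"
  shows "((\<lambda>\<tau>. (x-\<tau>) powr (-1/2) * (1+\<tau>) powr lam * (1+\<tau>)^k) has_integral
           (1+x) powr (lam + real k + 1/2) * Beta (lam + real k + 1) (1/2)) {-1..x}"
proof -
  define d where "d = 1 + x"
  have d: "d > 0" using x by (simp add: d_def)
  have h: "((\<lambda>t. t powr (lam + real k + 1 - 1) * (d - t) powr (1/2 - 1)) has_integral
      d powr (lam + real k + 1 + 1/2 - 1) * Beta (lam + real k + 1) (1/2)) (cbox 0 d)"
    using beta_aff[of "lam + real k + 1" "1/2" d] lam d by simp
  have img: "(\<lambda>t. t - 1) ` {0..d} = {-1..x}"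
    using image_affinity_atLeastAtMost[of 1 "-1" 0 d] d by (simp add: d_def)
  from has_integral_affinity[OF h, of 1 1] d
  have h2: "((\<lambda>\<tau>. (\<tau>+1) powr (lam + real k) * (d - (\<tau>+1)) powr (-1/2)) has_integral
      d powr (lam + real k + 1/2) * Beta (lam + real k + 1) (1/2)) {-1..x}"
    by (simp add: algebra_simps image_affinity_atLeastAtMost d_def)
  show ?thesis
  proof (rule has_integral_eq[OF _ h2[unfolded d_def]])
    fix t assume t: "t \<in> {-1..x}"
    then show "(t+1) powr (lam + real k) * (1 + x - (t+1)) powr (-1/2) = (x-t) powr (-1/2) * (1+t) powr lam * (1+t)^k"
      using powr_nat_combine[of "1+t" lam k] lam by (simp add: algebra_simps)
  qed
qed

lemma set_integrable_from_HK:
  fixes f :: "real \<Rightarrow> real"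
  assumes "f integrable_on {a..b}" "\<And>t. t \<in> {a..b} \<Longrightarrow> f t \<ge> 0" "f \<in> borel_measurable borel"
  shows "set_integrable lborel {a..b} f"
proof -
  have "f absolutely_integrable_on {a..b}"
    by (rule nonnegative_absolutely_integrable_1[OF assms(1,2)])
  hence "integrable lebesgue (\<lambda>t. indicator {a..b} t *\<^sub>R f t)"
    by (simp add: absolutely_integrable_on_def set_integrable_def)
  moreover have "(\<lambda>t. indicator {a..b} t *\<^sub>R f t) \<in> borel_measurable lborel"
    using assms(3) by measurable
  ultimately show ?thesis unfolding set_integrable_def using integrable_completion by blast
qed

lemma set_integrable_sum':
  fixes f :: "nat \<Rightarrow> real \<Rightarrow> real"
  assumes "\<And>k. k \<in> K \<Longrightarrow> set_integrable lborel S (f k)"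
  shows "set_integrable lborel S (\<lambda>t. \<Sum>k\<in>K. c k * f k t)"
proof -
  have i: "integrable lborel (\<lambda>t. indicator S t *\<^sub>R (c k * f k t))" if "k \<in> K" for k
  proof -
    have "integrable lborel (\<lambda>t. c k * (indicator S t *\<^sub>R f k t))"
      using assms[OF that] unfolding set_integrable_def by (rule integrable_mult_right)
    thus ?thesis by (simp add: mult_ac)
  qed
  have "integrable lborel (\<lambda>t. \<Sum>k\<in>K. indicator S t *\<^sub>R (c k * f k t))"
    by (rule Bochner_Integration.integrable_sum[where f="\<lambda>k t. indicator S t *\<^sub>R (c k * f k t)", OF i])
  thus ?thesis unfolding set_integrable_def by (simp add: sum_distrib_left)
qed

lemma Iminus_poly:
  fixes lam x :: real assumes lam: "lam > 0" and x: "x < 1"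
  shows "I_minus lam (\<lambda>\<tau>. \<Sum>k\<le>N. c k * (1-\<tau>)^k) x = (\<Sum>k\<le>N. c k * ((1-x)^(k+1) * Beta (lam + real k + 1) (1/2)))"
proof -
  define f where "f k \<tau> = (\<tau>-x) powr (-1/2) * (1-\<tau>) powr lam * (1-\<tau>)^k" for k \<tau>
  define V where "V k = (1-x) powr (lam + real k + 1/2) * Beta (lam + real k + 1) (1/2)" for k
  have hk: "(f k has_integral V k) {x..1}" for k unfolding f_def V_def by (rule term_minus[OF lam x])
  have meas: "f k \<in> borel_measurable borel" for k unfolding f_def by measurable
  have si: "set_integrable lborel {x..1} (f k)" for k
    by (rule set_integrable_from_HK[OF has_integral_integrable[OF hk] _ meas]) (auto simp: f_def)
  have eq: "(\<tau>-x) powr (-1/2) * (1-\<tau>) powr lam * (\<Sum>k\<le>N. c k * (1-\<tau>)^k) = (\<Sum>k\<le>N. c k * f k \<tau>)" for \<tau>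
    by (simp add: f_def sum_distrib_left mult_ac)
  have "((\<lambda>\<tau>. \<Sum>k\<le>N. c k * f k \<tau>) has_integral (\<Sum>k\<le>N. c k * V k)) {x..1}"
    by (intro has_integral_sum finite_atMost has_integral_mult_right hk)
  moreover have "set_integrable lborel {x..1} (\<lambda>\<tau>. \<Sum>k\<le>N. c k * f k \<tau>)"
    by (rule set_integrable_sum'[OF si])
  ultimately have "(LINT \<tau>:{x..1}|lborel. (\<Sum>k\<le>N. c k * f k \<tau>)) = (\<Sum>k\<le>N. c k * V k)"
    using set_borel_integral_eq_integral(2) integral_unique by metis
  hence "I_minus lam (\<lambda>\<tau>. \<Sum>k\<le>N. c k * (1-\<tau>)^k) x = (1-x) powr (-lam+1/2) * (\<Sum>k\<le>N. c k * V k)"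
    unfolding I_minus_def eq by simp
  also have "\<dots> = (\<Sum>k\<le>N. c k * ((1-x)^(k+1) * Beta (lam + real k + 1) (1/2)))"
  proof -
    have "(1-x) powr (-lam+1/2) * (1-x) powr (lam + real k + 1/2) = (1-x)^(k+1)" for k
    proof -
      have "(1-x) powr (-lam+1/2) * (1-x) powr (lam + real k + 1/2) = (1-x) powr (real (k+1))"
        by (simp add: powr_add[symmetric] algebra_simps)
      also have "\<dots> = (1-x)^(k+1)" using x by (intro powr_realpow) simp
      finally show ?thesis .
    qed
    thus ?thesis unfolding V_def sum_distrib_left by (intro sum.cong refl) (simp add: mult_ac)
  qed
  finally show ?thesis .
qed

lemma Iplus_poly:
  fixes lam x :: real assumes lam: "lam > 0" and x: "x > -1"
  shows "I_plus lam (\<lambda>\<tau>. \<Sum>k\<le>N. c k * (1+\<tau>)^k) x = (\<Sum>k\<le>N. c k * ((1+x)^(k+1) * Beta (lam + real k + 1) (1/2)))"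
proof -
  define f where "f k \<tau> = (x-\<tau>) powr (-1/2) * (1+\<tau>) powr lam * (1+\<tau>)^k" for k \<tau>
  define V where "V k = (1+x) powr (lam + real k + 1/2) * Beta (lam + real k + 1) (1/2)" for k
  have hk: "(f k has_integral V k) {-1..x}" for k unfolding f_def V_def by (rule term_plus[OF lam x])
  have meas: "f k \<in> borel_measurable borel" for k unfolding f_def by measurable
  have si: "set_integrable lborel {-1..x} (f k)" for k
    by (rule set_integrable_from_HK[OF has_integral_integrable[OF hk] _ meas]) (auto simp: f_def)
  have eq: "(x-\<tau>) powr (-1/2) * (1+\<tau>) powr lam * (\<Sum>k\<le>N. c k * (1+\<tau>)^k) = (\<Sum>k\<le>N. c k * f k \<tau>)" for \<tau>
    by (simp add: f_def sum_distrib_left mult_ac)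
  have "((\<lambda>\<tau>. \<Sum>k\<le>N. c k * f k \<tau>) has_integral (\<Sum>k\<le>N. c k * V k)) {-1..x}"
    by (intro has_integral_sum finite_atMost has_integral_mult_right hk)
  moreover have "set_integrable lborel {-1..x} (\<lambda>\<tau>. \<Sum>k\<le>N. c k * f k \<tau>)"
    by (rule set_integrable_sum'[OF si])
  ultimately have "(LINT \<tau>:{-1..x}|lborel. (\<Sum>k\<le>N. c k * f k \<tau>)) = (\<Sum>k\<le>N. c k * V k)"
    using set_borel_integral_eq_integral(2) integral_unique by metis
  hence "I_plus lam (\<lambda>\<tau>. \<Sum>k\<le>N. c k * (1+\<tau>)^k) x = (1+x) powr (-lam+1/2) * (\<Sum>k\<le>N. c k * V k)"
    unfolding I_plus_def eq by simp
  also have "\<dots> = (\<Sum>k\<le>N. c k * ((1+x)^(k+1) * Beta (lam + real k + 1) (1/2)))"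
  proof -
    have "(1+x) powr (-lam+1/2) * (1+x) powr (lam + real k + 1/2) = (1+x)^(k+1)" for k
    proof -
      have "(1+x) powr (-lam+1/2) * (1+x) powr (lam + real k + 1/2) = (1+x) powr (real (k+1))"
        by (simp add: powr_add[symmetric] algebra_simps)
      also have "\<dots> = (1+x)^(k+1)" using x by (intro powr_realpow) simp
      finally show ?thesis .
    qed
    thus ?thesis unfolding V_def sum_distrib_left by (intro sum.cong refl) (simp add: mult_ac)
  qed
  finally show ?thesis .
qed



definition KK :: "real \<Rightarrow> real" where "KK lam = sqrt pi * Gamma lam / Gamma (lam + 1/2)"

lemma Beta_closed:
  fixes lam :: real assumes lam: "lam > 0"
  shows "Beta (lam + real k + 1) (1/2) = KK lam * lam / (lam + 1/2) * pochhammer (lam+1) k / pochhammer (lam + 3/2) k"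
proof (induction k)
  case 0
  have n1: "lam \<notin> \<int>\<^sub>\<le>\<^sub>0" "lam + 1/2 \<notin> \<int>\<^sub>\<le>\<^sub>0" using lam by (auto elim!: nonpos_Ints_cases)
  have g1: "Gamma (lam + 1) = lam * Gamma lam" using Gamma_plus1[OF n1(1)] by simp
  have g2: "Gamma (lam + 1/2 + 1) = (lam + 1/2) * Gamma (lam + 1/2)" using Gamma_plus1[OF n1(2)] by simp
  have gp: "Gamma (lam + 1/2) > 0" by (rule Gamma_real_pos) (use lam in simp)
  have pos: "Gamma (lam + 1/2) \<noteq> 0" "lam + 1/2 \<noteq> 0" using gp lam by (metis less_irrefl, linarith)
  have e: "lam + real 0 + 1 + 1/2 = lam + 1/2 + 1" "lam + real 0 + 1 = lam + 1" by simp_all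
  have "Beta (lam + real 0 + 1) (1/2) = Gamma (lam+1) * Gamma (1/2) / Gamma (lam + 1/2 + 1)"
    unfolding Beta_def e by simp
  also have "\<dots> = lam * Gamma lam * sqrt pi / ((lam + 1/2) * Gamma (lam + 1/2))"
    unfolding g1 g2 Gamma_one_half_real by simp
  also have "\<dots> = KK lam * lam / (lam + 1/2)"
    unfolding KK_def using pos by (simp add: field_simps)
  finally show ?case by simp
next
  case (Suc k)
  have "(lam + real k + 1 + 1/2) * Beta (lam + real k + 1 + 1) (1/2) = (lam + real k + 1) * Beta (lam + real k + 1) (1/2)"
    using lam by (intro Beta_plus1_left) (auto elim!: nonpos_Ints_cases)
  hence "Beta (lam + real (Suc k) + 1) (1/2) = (lam + real k + 1) / (lam + real k + 3/2) * Beta (lam + real k + 1) (1/2)"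
    using lam by (simp add: field_simps add_ac)
  also note Suc.IH
  finally show ?case
    using lam by (simp add: pochhammer_rec' field_simps add_ac pochhammer_eq_0_iff)
qed

definition bq :: "real \<Rightarrow> nat \<Rightarrow> nat \<Rightarrow> real" where
  "bq lam n k = (real n + 2*lam) * ec lam n k - (real n + 1) * ec lam (n+1) k"

lemma bq0: "bq lam n 0 = 0"
proof -
  define p where "p = real n + 1"
  have p: "p \<noteq> 0" by (simp add: p_def)
  have "pochhammer (2*lam) (n+1+0) = pochhammer (2*lam) n * (2*lam + real n)" by (simp add: pochhammer_rec')
  moreover have "(fact (n+1-0) :: real) = p * fact n" by (simp add: p_def)
  moreover have "(fact n :: real) \<noteq> 0" by simp
  ultimately show ?thesis unfolding bq_def ec_def p_def[symmetric] using p by (simp add: field_simps)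
qed

lemma bq_gen:
  fixes lam :: real and j m :: nat
  assumes lam: "lam > 0"
  defines "n \<equiv> Suc (j+m)"
  shows "KK lam / 2 / (real n + lam + 1/2) * bq lam n (Suc j) = ec (lam+1/2) n j * Beta (lam + real j + 1) (1/2)"
proof -
  define P where "P = pochhammer (2*lam+1) (n+j)"
  define G where "G = pochhammer (lam+3/2) j"
  define L where "L = pochhammer (lam+1) j"
  define F where "F = (fact m :: real)"
  define J where "J = (fact j :: real)"
  define T where "T = (2::real)^j"
  define s where "s = ((-1::real)^j)"
  define R where "R = s * P / (F*J*G*T)"
  define B where "B = real m + 1"
  define C where "C = real j + 1"
  define M where "M = lam + 1/2"
  have nz: "F \<noteq> 0" "J \<noteq> 0" "G \<noteq> 0" "T \<noteq> 0" "L \<noteq> 0" "B \<noteq> 0" "C \<noteq> 0" "M \<noteq> 0"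
    using lam by (auto simp: F_def J_def G_def T_def L_def B_def C_def M_def pochhammer_eq_0_iff)
  have r: "pochhammer (2*(lam+1/2)) (n+j) = P"
    "(fact (n-j) :: real) = B*F" "(fact (n - Suc j) :: real) = F" "(fact (n + 1 - Suc j) :: real) = B*F"
    "pochhammer (lam+1/2+1/2) j = L"
    "(fact (Suc j) :: real) = C*J"
    "pochhammer (lam+1/2) (Suc j) = M*G"
    "(2::real)^Suc j = 2*T" "(-1::real)^Suc j = -s"
    by (simp_all add: P_def F_def B_def n_def L_def J_def C_def M_def G_def T_def s_def pochhammer_rec pochhammer_rec'
        algebra_simps Suc_diff_le)
  have r2: "pochhammer (2*lam) (n + Suc j) = 2*lam*P"
    unfolding P_def by (simp only: add_Suc_right pochhammer_rec)
  have r3: "pochhammer (2*lam) (n + 1 + Suc j) = 2*lam*P*(2*lam+1+real n+real j)"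
  proof -
    have "n + 1 + Suc j = Suc (Suc (n+j))" by simp
    hence "pochhammer (2*lam) (n + 1 + Suc j) = 2*lam * pochhammer (2*lam+1) (Suc (n+j))"
      by (simp only: pochhammer_rec)
    also have "\<dots> = 2*lam*P*(2*lam+1+real n+real j)" unfolding P_def pochhammer_rec' by (simp add: algebra_simps)
    finally show ?thesis .
  qed
  have le: "j \<le> n" "Suc j \<le> n" "Suc j \<le> n+1" by (simp_all add: n_def)
  have A: "ec (lam+1/2) n j * Beta (lam + real j + 1) (1/2) = R * KK lam * lam / (M * B)"
    unfolding ec_def if_P[OF le(1)] r Beta_closed[OF lam] R_def
    unfolding L_def[symmetric] G_def[symmetric] M_def[symmetric] s_def[symmetric] J_def[symmetric] T_def[symmetric] using nz
    by (simp add: field_simps)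
  have E1: "ec lam n (Suc j) = -R*(2*lam)/(C*M*2)"
    unfolding ec_def if_P[OF le(2)] r r2 R_def using nz by (simp add: field_simps)
  have E2: "ec lam (n+1) (Suc j) = -R*(2*lam*(2*lam+1+real n+real j))/(B*C*M*2)"
    unfolding ec_def if_P[OF le(3)] r r3 R_def using nz by (simp add: field_simps)
  have c: "real n = C + B - 1" "lam = M - 1/2" "real j = C - 1" by (simp_all add: n_def C_def B_def M_def)
  have b: "bq lam n (Suc j) = R * lam * (2*(real n + lam + 1/2)) / (M*B)"
    unfolding bq_def E1 E2 unfolding c using nz by (simp add: field_simps)
  have w: "real n + lam + 1/2 \<noteq> 0" using lam by simp
  have gen: "K/2/w * (R*lam*(2*w)/(M*B)) = R*K*lam/(M*B)" if "w \<noteq> 0" for w K :: real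
    using that by (simp add: field_simps)
  show ?thesis unfolding A b by (rule gen[OF w])
qed

lemma bq_top:
  fixes lam :: real and n :: nat
  assumes lam: "lam > 0"
  shows "KK lam / 2 / (real n + lam + 1/2) * bq lam n (Suc n) = ec (lam+1/2) n n * Beta (lam + real n + 1) (1/2)"
proof -
  define P where "P = pochhammer (2*lam+1) (n+n)"
  define G where "G = pochhammer (lam+3/2) n"
  define L where "L = pochhammer (lam+1) n"
  define J where "J = (fact n :: real)"
  define T where "T = (2::real)^n"
  define s where "s = ((-1::real)^n)"
  define R where "R = s * P / (J*G*T)"
  define C where "C = real n + 1"
  define M where "M = lam + 1/2"
  have nz: "J \<noteq> 0" "G \<noteq> 0" "T \<noteq> 0" "L \<noteq> 0" "C \<noteq> 0" "M \<noteq> 0"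
    using lam by (auto simp: J_def G_def T_def L_def C_def M_def pochhammer_eq_0_iff)
  have r: "pochhammer (2*(lam+1/2)) (n+n) = P"
    "(fact (n-n) :: real) = 1" "(fact (n + 1 - Suc n) :: real) = 1"
    "pochhammer (lam+1/2+1/2) n = L"
    "(fact (Suc n) :: real) = C*J"
    "pochhammer (lam+1/2) (Suc n) = M*G"
    "(2::real)^Suc n = 2*T" "(-1::real)^Suc n = -s"
    by (simp_all add: P_def L_def J_def C_def M_def G_def T_def s_def pochhammer_rec algebra_simps)
  have r3: "pochhammer (2*lam) (n + 1 + Suc n) = 2*lam*P*(2*lam+1+real n+real n)"
  proof -
    have "n + 1 + Suc n = Suc (Suc (n+n))" by simp
    hence "pochhammer (2*lam) (n + 1 + Suc n) = 2*lam * pochhammer (2*lam+1) (Suc (n+n))"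
      by (simp only: pochhammer_rec)
    also have "\<dots> = 2*lam*P*(2*lam+1+real n+real n)" unfolding P_def pochhammer_rec' by (simp add: algebra_simps)
    finally show ?thesis .
  qed
  have le: "n \<le> n" "Suc n \<le> n+1" by simp_all
  have A: "ec (lam+1/2) n n * Beta (lam + real n + 1) (1/2) = R * KK lam * lam / M"
    unfolding ec_def if_P[OF le(1)] r Beta_closed[OF lam] R_def
    unfolding L_def[symmetric] G_def[symmetric] M_def[symmetric] s_def[symmetric] J_def[symmetric] T_def[symmetric]
    using nz by (simp add: field_simps)
  have E2: "ec lam (n+1) (Suc n) = -R*(2*lam*(2*lam+1+real n+real n))/(C*M*2)"
    unfolding ec_def if_P[OF le(2)] r r3 R_def using nz by (simp add: field_simps)
  have E1: "ec lam n (Suc n) = 0" by (simp add: ec_def)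
  have b: "bq lam n (Suc n) = R * lam * (2*(real n + lam + 1/2)) / M"
  proof -
    have c: "real n = C - 1" by (simp add: C_def)
    show ?thesis unfolding bq_def E1 E2 c using nz by (simp add: field_simps)
  qed
  have w: "real n + lam + 1/2 \<noteq> 0" using lam by simp
  have gen: "K/2/w * (R*lam*(2*w)/M) = R*K*lam/M" if "w \<noteq> 0" for w K :: real
    using that by (simp add: field_simps)
  show ?thesis unfolding A b by (rule gen[OF w])
qed

lemma bq_coef:
  fixes lam :: real assumes lam: "lam > 0" and j: "j \<le> n"
  shows "KK lam / 2 / (real n + lam + 1/2) * bq lam n (Suc j) = ec (lam+1/2) n j * Beta (lam + real j + 1) (1/2)"
proof (cases "j = n")
  case True then show ?thesis using bq_top[OF lam, of n] by simp
next
  case False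
  then obtain m where n: "n = Suc (j+m)" using j by (metis add_Suc_right le_neq_implies_less less_imp_Suc_add)
  show ?thesis using bq_gen[OF lam, of j m] unfolding n[symmetric] .
qed

lemma Qid:
  fixes lam x :: real assumes lam: "lam > 0"
  shows "(\<Sum>k\<le>n. ec (lam+1/2) n k * ((1-x)^(k+1) * Beta (lam + real k + 1) (1/2)))
    = KK lam / 2 / (real n + lam + 1/2) * ((real n + 2*lam) * EE lam n x - (real n + 1) * EE lam (n+1) x)"
proof -
  define y where "y = 1 - x"
  define c where "c = KK lam / 2 / (real n + lam + 1/2)"
  have "(real n + 2*lam) * EE lam n x - (real n + 1) * EE lam (n+1) x
     = (real n + 2*lam) * (\<Sum>k\<le>Suc n. ec lam n k * y^k) - (real n + 1) * (\<Sum>k\<le>Suc n. ec lam (n+1) k * y^k)"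
    unfolding y_def by (subst EE_ext[of n "Suc n"], simp, subst EE_ext[of "n+1" "Suc n"], simp_all)
  also have "\<dots> = (\<Sum>k\<le>Suc n. bq lam n k * y^k)"
    unfolding bq_def sum_distrib_left sum_subtractf[symmetric] by (intro sum.cong refl) (simp add: algebra_simps)
  also have "\<dots> = (\<Sum>k\<le>n. bq lam n (Suc k) * y^(k+1))"
    by (subst sum.atMost_Suc_shift) (simp add: bq0)
  finally have "c * ((real n + 2*lam) * EE lam n x - (real n + 1) * EE lam (n+1) x) = (\<Sum>k\<le>n. (c * bq lam n (Suc k)) * y^(k+1))"
    by (simp add: sum_distrib_left mult_ac)
  also have "\<dots> = (\<Sum>k\<le>n. ec (lam+1/2) n k * ((1-x)^(k+1) * Beta (lam + real k + 1) (1/2)))"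
  proof (intro sum.cong refl)
    fix k assume "k \<in> {..n}"
    hence e: "c * bq lam n (Suc k) = ec (lam+1/2) n k * Beta (lam + real k + 1) (1/2)"
      unfolding c_def using bq_coef[OF lam] by simp
    show "(c * bq lam n (Suc k)) * y^(k+1) = ec (lam+1/2) n k * ((1-x)^(k+1) * Beta (lam + real k + 1) (1/2))"
      unfolding e y_def by (simp add: mult_ac)
  qed
  finally show ?thesis by (simp add: c_def)
qed



theorem theorem3p3:
  fixes lam x :: real and n :: nat
  assumes "lam > 0" and "x \<in> {-1..1}"
  shows "(calI_plus lam (gegenbauer (lam + 1/2) n) x =
           sqrt pi * Gamma lam / Gamma (lam + 1/2) * ((real n + 2 * lam) / (real n + lam + 1/2))
             * gegenbauer lam n x) \<and>
         (calI_minus lam (gegenbauer (lam + 1/2) n) x =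
           sqrt pi * Gamma lam / Gamma (lam + 1/2) * ((real n + 1) / (real n + lam + 1/2))
             * gegenbauer lam (n + 1) x)"
proof -
  have lam: "lam > 0" using assms by simp
  have x1: "x \<le> 1" "x \<ge> -1" using assms by auto
  define mu where "mu = lam + 1/2"
  have mu: "mu > 0" using lam by (simp add: mu_def)
  define S where "S z = (\<Sum>k\<le>n. ec mu n k * ((1-z)^(k+1) * Beta (lam + real k + 1) (1/2)))" for z
  define c where "c = KK lam / 2 / (real n + lam + 1/2)"
  define g where "g m z = gegenbauer lam m z" for m z
  have Sg: "S z = c * ((real n + 2*lam) * g n z - (real n + 1) * g (n+1) z)" for z
    unfolding S_def c_def g_def mu_def Qid[OF lam] EE_geg[OF lam] ..
  have S1: "S 1 = 0" by (simp add: S_def)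
  have fm: "gegenbauer mu n = (\<lambda>\<tau>. \<Sum>k\<le>n. ec mu n k * (1-\<tau>)^k)"
    by (rule ext) (simp add: EE_geg[OF mu, symmetric] EE_def)
  have fp: "gegenbauer mu n = (\<lambda>\<tau>. \<Sum>k\<le>n. ((-1)^n * ec mu n k) * (1+\<tau>)^k)"
  proof (rule ext)
    fix t
    have "gegenbauer mu n t = (-1)^n * gegenbauer mu n (-t)"
      using geg_parity[of mu n t] by (simp add: mult.assoc[symmetric] power_mult_distrib[symmetric])
    also have "\<dots> = (\<Sum>k\<le>n. ((-1)^n * ec mu n k) * (1+t)^k)"
      by (simp add: EE_geg[OF mu, symmetric] EE_def sum_distrib_left mult_ac)
    finally show "gegenbauer mu n t = (\<Sum>k\<le>n. ((-1)^n * ec mu n k) * (1+t)^k)" .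
  qed
  have Im: "I_minus lam (gegenbauer mu n) x = S x"
  proof (cases "x = 1")
    case True then show ?thesis using S1 by (simp add: I_minus_def)
  next
    case False
    hence "x < 1" using x1 by simp
    then show ?thesis unfolding fm S_def by (rule Iminus_poly[OF lam])
  qed
  have Ip: "I_plus lam (gegenbauer mu n) x = (-1)^n * S (-x)"
  proof (cases "x = -1")
    case True then show ?thesis using S1 by (simp add: I_plus_def)
  next
    case False
    hence "x > -1" using x1 by simp
    hence "I_plus lam (\<lambda>\<tau>. \<Sum>k\<le>n. ((-1)^n * ec mu n k) * (1+\<tau>)^k) x
        = (\<Sum>k\<le>n. ((-1)^n * ec mu n k) * ((1+x)^(k+1) * Beta (lam + real k + 1) (1/2)))"
      by (rule Iplus_poly[OF lam])
    also have "\<dots> = (-1)^n * S (-x)" unfolding S_def sum_distrib_left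
      by (intro sum.cong refl) (simp add: mult_ac)
    finally show ?thesis unfolding fp .
  qed
  have par: "g m (-x) = (-1)^m * g m x" for m unfolding g_def by (rule geg_parity)
  have sq: "((-1::real)^n) * (-1)^n = 1" by (simp add: power_mult_distrib[symmetric])
  have w: "real n + lam + 1/2 \<noteq> 0" using lam by simp
  have K: "sqrt pi * Gamma lam / Gamma (lam + 1/2) = 2 * c * (real n + lam + 1/2)"
    unfolding c_def KK_def using w by simp
  have P: "calI_plus lam (gegenbauer mu n) x = 2 * c * (real n + 2*lam) * g n x"
    unfolding calI_plus_def Ip Im Sg par using sq by (simp add: algebra_simps)
  have M: "calI_minus lam (gegenbauer mu n) x = 2 * c * (real n + 1) * g (n+1) x"
    unfolding calI_minus_def Ip Im Sg par using sq by (simp add: algebra_simps)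
  show ?thesis unfolding K unfolding mu_def[symmetric] P M g_def using w by (simp add: field_simps)
qed


end
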